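(* Let $X$ be a countably infinite set and $W=\mathbb R^X$. Then (1) the relation $\blacktriangleright$ on $W$ is a preorder satisfying Strong Pareto, Permutation Invariance, and Quasi-Independence; and (2) $\blacktriangleright$ weakly extends $\succeq_{SP}$ and is strictly larger than it: there exist $w,v\in W$ with $w\blacktriangleright v$ but not $w\succeq_{SP} v$.
   Context: Addition and scalar multiplication of worlds are pointwise. For a preorder $\succeq$, $w\succ v$ means $w\succeq v$ and not $v\succeq w$. For a permutation $\pi$ of $X$, $\pi(w)(x)=w(\pi(x))$. Strong Pareto: for all $w,v\in W$, if $w(x)\ge v(x)$ for all $x$ and $w(x)>v(x)$ for some $x$, then $w\succ v$. Permutation Invariance: for all $w,v\in W$ and every permutation $\pi$ of $X$, $w\succeq v$ iff $\pi(w)\succeq\pi(v)$. Quasi-Independence: for all $w,v,u\in W$, if $w\succeq v$ then for every $\alpha\in[0,1]$, $\alpha w+(1-\alpha)u\succeq \alpha v+(1-\alpha)u$. A series $\sum_{x\in X}a_x$ converges unconditionally (diverges unconditionally to $+\infty$) if it converges to the same value (diverges to $+\infty$) under every enumeration of $X$. Sum Preorder: $w\succeq_{SP} v$ iff $\sum_{x\in X}(w(x)-v(x))$ converges unconditionally to some $r\ge 0$ or diverges unconditionally to $+\infty$. Relation $\blacktriangleright$: $w\blacktriangleright v$ iff either (i) $w\succeq_{SP} v$, or (ii) all of: (a) not $w\succeq_{SP} v$; (b) there exist $c>0$ and an infinite $A\subseteq X$ with $w(x)-v(x)>c$ for all $x\in A$; (c) there do not exist $d>0$ and an infinite $B\subseteq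 X$ with $v(x)-w(x)>d$ for all $x\in B$. A relation $\succeq$ weakly extends $\succeq'$ if $w\succeq' v$ implies $w\succeq v$. *)

theory Defs
  imports "HOL-Analysis.Analysis"
begin

definition conv_uncond :: "('x \<Rightarrow> real) \<Rightarrow> real \<Rightarrow> bool" where
  "conv_uncond a r \<longleftrightarrow>
     (\<forall>e :: nat \<Rightarrow> 'x. bij e \<longrightarrow> (\<lambda>n. \<Sum>i<n. a (e i)) \<longlonglongrightarrow> r)"

definition div_uncond_top :: "('x \<Rightarrow> real) \<Rightarrow> bool" where
  "div_uncond_top a \<longleftrightarrow>
     (\<forall>e :: nat \<Rightarrow> 'x. bij e \<longrightarrow> filterlim (\<lambda>n. \<Sum>i<n. a (e i)) at_top sequentially)"

definition sum_preorder :: "('x \<Rightarrow> real) \<Rightarrow> ('x \<Rightarrow> real) \<Rightarrow> bool" where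
  "sum_preorder w v \<longleftrightarrow>
     (\<exists>r\<ge>0. conv_uncond (\<lambda>x. w x - v x) r) \<or> div_uncond_top (\<lambda>x. w x - v x)"

definition btri :: "('x \<Rightarrow> real) \<Rightarrow> ('x \<Rightarrow> real) \<Rightarrow> bool" where
  "btri w v \<longleftrightarrow> sum_preorder w v \<or>
     (\<not> sum_preorder w v \<and>
      (\<exists>c>0. \<exists>A. infinite A \<and> (\<forall>x\<in>A. w x - v x > c)) \<and>
      \<not> (\<exists>d>0. \<exists>B. infinite B \<and> (\<forall>x\<in>B. v x - w x > d)))"

definition strict_of :: "('w \<Rightarrow> 'w \<Rightarrow> bool) \<Rightarrow> 'w \<Rightarrow> 'w \<Rightarrow> bool" where
  "strict_of R w v \<longleftrightarrow> R w v \<and> \<not> R v w"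

definition is_preorder :: "('w \<Rightarrow> 'w \<Rightarrow> bool) \<Rightarrow> bool" where
  "is_preorder R \<longleftrightarrow> (\<forall>w. R w w) \<and> (\<forall>u v w. R u v \<longrightarrow> R v w \<longrightarrow> R u w)"

definition strong_pareto :: "(('x \<Rightarrow> real) \<Rightarrow> ('x \<Rightarrow> real) \<Rightarrow> bool) \<Rightarrow> bool" where
  "strong_pareto R \<longleftrightarrow> (\<forall>w v. (\<forall>x. w x \<ge> v x) \<and> (\<exists>x. w x > v x) \<longrightarrow> strict_of R w v)"

definition permutation_invariance :: "(('x \<Rightarrow> real) \<Rightarrow> ('x \<Rightarrow> real) \<Rightarrow> bool) \<Rightarrow> bool" where
  "permutation_invariance R \<longleftrightarrow>
     (\<forall>w v (\<pi> :: 'x \<Rightarrow> 'x). bij \<pi> \<longrightarrow> (R w v \<longleftrightarrow> R (w \<circ> \<pi>) (v \<circ> \<pi>)))"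

definition quasi_independence :: "(('x \<Rightarrow> real) \<Rightarrow> ('x \<Rightarrow> real) \<Rightarrow> bool) \<Rightarrow> bool" where
  "quasi_independence R \<longleftrightarrow>
     (\<forall>w v u. R w v \<longrightarrow> (\<forall>\<alpha>::real. 0 \<le> \<alpha> \<and> \<alpha> \<le> 1 \<longrightarrow>
        R (\<lambda>x. \<alpha> * w x + (1 - \<alpha>) * u x) (\<lambda>x. \<alpha> * v x + (1 - \<alpha>) * u x)))"

definition weakly_extends :: "('w \<Rightarrow> 'w \<Rightarrow> bool) \<Rightarrow> ('w \<Rightarrow> 'w \<Rightarrow> bool) \<Rightarrow> bool" where
  "weakly_extends R R' \<longleftrightarrow> (\<forall>w v. R' w v \<longrightarrow> R w v)"

end

theory Submission
  imports Defs
begin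

definition SPd :: "('x \<Rightarrow> real) \<Rightarrow> bool" where
  "SPd a \<longleftrightarrow> (\<exists>r\<ge>0. conv_uncond a r) \<or> div_uncond_top a"
definition POS :: "('x \<Rightarrow> real) \<Rightarrow> bool" where
  "POS a \<longleftrightarrow> (\<exists>c>0. \<exists>A. infinite A \<and> (\<forall>x\<in>A. a x > c))"
definition NEG :: "('x \<Rightarrow> real) \<Rightarrow> bool" where
  "NEG a \<longleftrightarrow> (\<exists>d>0. \<exists>B. infinite B \<and> (\<forall>x\<in>B. a x < -d))"
definition BT :: "('x \<Rightarrow> real) \<Rightarrow> bool" where
  "BT a \<longleftrightarrow> SPd a \<or> (\<not> SPd a \<and> POS a \<and> \<not> NEG a)"

lemma btri_BT: "btri w v = BT (\<lambda>x. w x - v x)"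
proof -
  have "(\<forall>x\<in>B. v x - w x > d) \<longleftrightarrow> (\<forall>x\<in>B. w x - v x < - d)" for B d
    by auto
  then show ?thesis
    unfolding btri_def BT_def SPd_def sum_preorder_def POS_def NEG_def by simp
qed

lemma conv_scale: "conv_uncond a r \<Longrightarrow> conv_uncond (\<lambda>x. c * a x) (c * r)"
  unfolding conv_uncond_def by (auto simp: sum_distrib_left[symmetric] intro: tendsto_mult_left)

lemma div_scale: "c > 0 \<Longrightarrow> div_uncond_top a \<Longrightarrow> div_uncond_top (\<lambda>x. c * a x)"
  unfolding div_uncond_top_def
  by (auto simp: sum_distrib_left[symmetric] intro!: filterlim_tendsto_pos_mult_at_top[OF tendsto_const])

lemma SPd_scale: assumes c: "c > 0" and "SPd a" shows "SPd (\<lambda>x. c * a x)"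
  using assms(2) unfolding SPd_def
proof (elim disjE exE conjE)
  fix r assume r: "r \<ge> 0" "conv_uncond a r"
  have "conv_uncond (\<lambda>x. c * a x) (c * r)" using conv_scale[OF r(2)] .
  moreover have "c * r \<ge> 0" using c r by simp
  ultimately show "(\<exists>r\<ge>0. conv_uncond (\<lambda>x. c * a x) r) \<or> div_uncond_top (\<lambda>x. c * a x)" by blast
next
  assume "div_uncond_top a"
  then show "(\<exists>r\<ge>0. conv_uncond (\<lambda>x. c * a x) r) \<or> div_uncond_top (\<lambda>x. c * a x)"
    using div_scale[OF c] by blast
qed

lemma SPd_scale_iff: assumes "c > 0" shows "SPd (\<lambda>x. c * a x) \<longleftrightarrow> SPd a"
proof
  assume "SPd (\<lambda>x. c * a x)"
  from SPd_scale[OF _ this, of "inverse c"] assms have "SPd (\<lambda>x. inverse c * (c * a x))" by simp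
  moreover have "(\<lambda>x. inverse c * (c * a x)) = a" using assms by (auto simp: field_simps)
  ultimately show "SPd a" by simp
qed (use SPd_scale assms in auto)

lemma POS_scale: assumes c: "c > 0" and "POS a" shows "POS (\<lambda>x. c * a x)"
proof -
  obtain d A where d: "d > 0" "infinite A" "\<forall>x\<in>A. a x > d" using assms(2) unfolding POS_def by blast
  have "\<forall>x\<in>A. c * a x > c * d" using d(3) c by simp
  moreover have "c * d > 0" using c d by simp
  ultimately show ?thesis using d(2) unfolding POS_def by blast
qed

lemma NEG_scale: "c > 0 \<Longrightarrow> NEG (\<lambda>x. c * a x) \<Longrightarrow> NEG a"
proof -
  assume c: "c > 0" and "NEG (\<lambda>x. c * a x)"
  then obtain d B where d: "d > 0" "infinite B" "\<forall>x\<in>B. c * a x < -d" unfolding NEG_def by blast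
  have "\<forall>x\<in>B. a x < - (d / c)"
    using d(3) c by (auto simp: field_simps)
  moreover have "d / c > 0" using d c by simp
  ultimately show "NEG a" using d(2) unfolding NEG_def by blast
qed

lemma SPd_zero: "SPd (\<lambda>x. 0)"
  unfolding SPd_def conv_uncond_def by auto

lemma BT_scale: assumes "0 \<le> c" "BT a" shows "BT (\<lambda>x. c * a x)"
proof (cases "c = 0")
  case True then show ?thesis by (simp add: BT_def SPd_zero)
next
  case False
  then have c: "c > 0" using assms by simp
  then show ?thesis using assms(2) SPd_scale_iff[OF c] POS_scale[OF c] NEG_scale[OF c]
    unfolding BT_def by blast
qed

lemma conv_perm: fixes p :: "'x \<Rightarrow> 'y" and a :: "'y \<Rightarrow> real" assumes "bij p" "conv_uncond a r" shows "conv_uncond (a \<circ> p) r"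
  unfolding conv_uncond_def
proof (intro allI impI)
  fix e :: "nat \<Rightarrow> 'x" assume e: "bij e"
  have "bij (p \<circ> e)" using bij_comp[OF e assms(1)] .
  then have "(\<lambda>n. \<Sum>i<n. a ((p \<circ> e) i)) \<longlonglongrightarrow> r" using assms(2) unfolding conv_uncond_def by blast
  then show "(\<lambda>n. \<Sum>i<n. (a \<circ> p) (e i)) \<longlonglongrightarrow> r" by (simp add: comp_def)
qed

lemma div_perm: fixes p :: "'x \<Rightarrow> 'y" and a :: "'y \<Rightarrow> real" assumes "bij p" "div_uncond_top a" shows "div_uncond_top (a \<circ> p)"
  unfolding div_uncond_top_def
proof (intro allI impI)
  fix e :: "nat \<Rightarrow> 'x" assume e: "bij e"
  have "bij (p \<circ> e)" using bij_comp[OF e assms(1)] .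
  then have "filterlim (\<lambda>n. \<Sum>i<n. a ((p \<circ> e) i)) at_top sequentially" using assms(2) unfolding div_uncond_top_def by blast
  then show "filterlim (\<lambda>n. \<Sum>i<n. (a \<circ> p) (e i)) at_top sequentially" by (simp add: comp_def)
qed

lemma inf_vimage: assumes "bij p" "infinite A" shows "infinite (p -` A)"
proof
  assume "finite (p -` A)"
  then have "finite (p ` (p -` A))" by (rule finite_imageI)
  moreover have "p ` (p -` A) = A" using surj_image_vimage_eq[OF bij_is_surj[OF assms(1)]] .
  ultimately show False using assms(2) by simp
qed

lemma POS_perm: assumes "bij p" "POS a" shows "POS (a \<circ> p)"
proof -
  obtain c A where c: "c > 0" "infinite A" "\<forall>x\<in>A. a x > c" using assms(2) unfolding POS_def by blast
  have "infinite (p -` A)" using inf_vimage[OF assms(1) c(2)] .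
  moreover have "\<forall>x\<in>p -` A. (a \<circ> p) x > c" using c(3) by simp
  ultimately show ?thesis using c(1) unfolding POS_def by blast
qed

lemma NEG_perm: assumes "bij p" "NEG a" shows "NEG (a \<circ> p)"
proof -
  obtain c A where c: "c > 0" "infinite A" "\<forall>x\<in>A. a x < -c" using assms(2) unfolding NEG_def by blast
  have "infinite (p -` A)" using inf_vimage[OF assms(1) c(2)] .
  moreover have "\<forall>x\<in>p -` A. (a \<circ> p) x < -c" using c(3) by simp
  ultimately show ?thesis using c(1) unfolding NEG_def by blast
qed

lemma SPd_perm: "bij p \<Longrightarrow> SPd a \<Longrightarrow> SPd (a \<circ> p)"
  unfolding SPd_def using conv_perm div_perm by blast

lemma perm_iff:
  fixes p :: "'x \<Rightarrow> 'x" and P :: "('x \<Rightarrow> 'b) \<Rightarrow> bool"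
  assumes "bij p" "\<And>q b. bij q \<Longrightarrow> P b \<Longrightarrow> P (b \<circ> q)"
  shows "P (a \<circ> p) \<longleftrightarrow> P a"
proof
  assume "P (a \<circ> p)"
  from assms(2)[OF bij_imp_bij_inv[OF assms(1)] this] 
  have "P (a \<circ> p \<circ> inv p)" .
  moreover have "a \<circ> p \<circ> inv p = a"
    by (rule ext) (simp add: surj_f_inv_f[OF bij_is_surj[OF assms(1)]])
  ultimately show "P a" by simp
qed (use assms in auto)

lemma BT_perm: fixes p :: "'x \<Rightarrow> 'x" and a :: "'x \<Rightarrow> real" shows "bij p \<Longrightarrow> BT (a \<circ> p) \<longleftrightarrow> BT a"
  unfolding BT_def using perm_iff[of p SPd] perm_iff[of p POS] perm_iff[of p NEG]
    SPd_perm POS_perm NEG_perm by blast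

lemma ex_enum: assumes "infinite (UNIV :: 'x::countable set)" shows "\<exists>e :: nat \<Rightarrow> 'x. bij e"
proof -
  obtain f :: "'x \<Rightarrow> nat" where "bij_betw f UNIV UNIV"
    using countableE_infinite[OF countableI_type assms] by blast
  then have "bij (inv f)" by (simp add: bij_imp_bij_inv)
  thus ?thesis by blast
qed

lemma conv_add: assumes "conv_uncond a r" "conv_uncond b s" shows "conv_uncond (\<lambda>x. a x + b x) (r + s)"
  unfolding conv_uncond_def
proof (intro allI impI)
  fix e :: "nat \<Rightarrow> 'a" assume e: "bij e"
  have 1: "(\<lambda>n. \<Sum>i<n. a (e i)) \<longlonglongrightarrow> r" using assms(1) e unfolding conv_uncond_def by blast
  have 2: "(\<lambda>n. \<Sum>i<n. b (e i)) \<longlonglongrightarrow> s" using assms(2) e unfolding conv_uncond_def by blast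
  show "(\<lambda>n. \<Sum>i<n. a (e i) + b (e i)) \<longlonglongrightarrow> r + s"
    unfolding sum.distrib by (rule tendsto_add[OF 1 2])
qed

lemma conv_div_add: assumes "conv_uncond a r" "div_uncond_top b" shows "div_uncond_top (\<lambda>x. a x + b x)"
  unfolding div_uncond_top_def
proof (intro allI impI)
  fix e :: "nat \<Rightarrow> 'a" assume e: "bij e"
  have 1: "(\<lambda>n. \<Sum>i<n. a (e i)) \<longlonglongrightarrow> r" using assms(1) e unfolding conv_uncond_def by blast
  have 2: "filterlim (\<lambda>n. \<Sum>i<n. b (e i)) at_top sequentially" using assms(2) e unfolding div_uncond_top_def by blast
  show "filterlim (\<lambda>n. \<Sum>i<n. a (e i) + b (e i)) at_top sequentially"
    unfolding sum.distrib by (rule filterlim_tendsto_add_at_top[OF 1 2])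
qed

lemma div_add: assumes "div_uncond_top a" "div_uncond_top b" shows "div_uncond_top (\<lambda>x. a x + b x)"
  unfolding div_uncond_top_def
proof (intro allI impI)
  fix e :: "nat \<Rightarrow> 'a" assume e: "bij e"
  have 1: "filterlim (\<lambda>n. \<Sum>i<n. a (e i)) at_top sequentially" using assms(1) e unfolding div_uncond_top_def by blast
  have 2: "filterlim (\<lambda>n. \<Sum>i<n. b (e i)) at_top sequentially" using assms(2) e unfolding div_uncond_top_def by blast
  show "filterlim (\<lambda>n. \<Sum>i<n. a (e i) + b (e i)) at_top sequentially"
    unfolding sum.distrib by (rule filterlim_at_top_add_at_top[OF 1 2])
qed

lemma SPd_add: assumes "SPd a" "SPd b" shows "SPd (\<lambda>x. a x + b x)"
proof -
  have c: "div_uncond_top (\<lambda>x. a x + b x)" if "conv_uncond b r" "div_uncond_top a" for r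
  proof -
    have "div_uncond_top (\<lambda>x. b x + a x)" using conv_div_add[OF that] .
    moreover have "(\<lambda>x. b x + a x) = (\<lambda>x. a x + b x)" by (simp add: add.commute)
    ultimately show ?thesis by simp
  qed
  from assms(1)[unfolded SPd_def] show ?thesis
  proof (elim disjE exE conjE)
    fix r assume r: "r \<ge> 0" "conv_uncond a r"
    from assms(2)[unfolded SPd_def] show ?thesis
    proof (elim disjE exE conjE)
      fix s assume s: "s \<ge> 0" "conv_uncond b s"
      have "conv_uncond (\<lambda>x. a x + b x) (r + s)" using conv_add[OF r(2) s(2)] .
      moreover have "r + s \<ge> 0" using r s by simp
      ultimately show ?thesis unfolding SPd_def by blast
    next
      assume "div_uncond_top b"
      then show ?thesis unfolding SPd_def using conv_div_add[OF r(2)] by blast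
    qed
  next
    assume da: "div_uncond_top a"
    from assms(2)[unfolded SPd_def] show ?thesis
    proof (elim disjE exE conjE)
      fix s assume s: "s \<ge> 0" "conv_uncond b s"
      have "div_uncond_top (\<lambda>x. a x + b x)" using c[OF s(2) da] .
      then show ?thesis unfolding SPd_def by blast
    next
      assume "div_uncond_top b"
      then show ?thesis unfolding SPd_def using div_add[OF da] by blast
    qed
  qed
qed

lemma NEG_add: assumes "\<not> NEG a" "\<not> NEG b" shows "\<not> NEG (\<lambda>x. a x + b x)"
proof
  assume "NEG (\<lambda>x. a x + b x)"
  then obtain d B where d: "d > 0" "infinite B" "\<forall>x\<in>B. a x + b x < -d" unfolding NEG_def by blast
  have "B \<subseteq> {x\<in>B. a x < -(d/2)} \<union> {x\<in>B. b x < -(d/2)}"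
  proof
    fix x assume x: "x \<in> B"
    then have "a x + b x < -d" using d(3) by blast
    then have "a x < -(d/2) \<or> b x < -(d/2)" by linarith
    then show "x \<in> {x\<in>B. a x < -(d/2)} \<union> {x\<in>B. b x < -(d/2)}" using x by blast
  qed
  then have "infinite {x\<in>B. a x < -(d/2)} \<or> infinite {x\<in>B. b x < -(d/2)}"
    using d(2) finite_subset by auto
  moreover have "d/2 > 0" using d by simp
  ultimately show False using assms unfolding NEG_def by blast
qed

lemma POS_add: assumes "POS a" "\<not> NEG b" shows "POS (\<lambda>x. a x + b x)"
proof -
  obtain c A where c: "c > 0" "infinite A" "\<forall>x\<in>A. a x > c" using assms(1) unfolding POS_def by blast
  have "finite {x\<in>A. b x < -(c/2)}"
  proof (rule ccontr)
    assume "infinite {x\<in>A. b x < -(c/2)}"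
    moreover have "c/2 > 0" using c by simp
    ultimately have "NEG b" unfolding NEG_def by blast
    with assms(2) show False by simp
  qed
  then have "infinite (A - {x\<in>A. b x < -(c/2)})" using c(2) by simp
  moreover have "\<forall>x\<in>A - {x\<in>A. b x < -(c/2)}. a x + b x > c/2"
  proof
    fix x assume x: "x \<in> A - {x\<in>A. b x < -(c/2)}"
    then have "a x > c" using c(3) by blast
    moreover have "b x \<ge> -(c/2)" using x by auto
    ultimately show "a x + b x > c/2" by linarith
  qed
  moreover have "c/2 > 0" using c by simp
  ultimately show ?thesis unfolding POS_def by blast
qed

lemma BT_add:
  assumes "BT a" "BT b" "\<not> NEG a" "\<not> NEG b"
  shows "BT (\<lambda>x. a x + b x)"
proof (cases "SPd a \<and> SPd b")
  case True then show ?thesis using SPd_add BT_def by blast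
next
  case False
  then have "POS a \<or> POS b" using assms unfolding BT_def by blast
  then have "POS (\<lambda>x. a x + b x)"
  proof
    assume "POS a" then show ?thesis using POS_add[of a b] assms by blast
  next
    assume "POS b" then have "POS (\<lambda>x. b x + a x)" using POS_add[of b a] assms by blast
    moreover have "(\<lambda>x. b x + a x) = (\<lambda>x. a x + b x)" by (simp add: add.commute)
    ultimately show ?thesis by simp
  qed
  moreover have "\<not> NEG (\<lambda>x. a x + b x)" using NEG_add assms by blast
  ultimately show ?thesis unfolding BT_def by blast
qed

lemma incseq_unbounded_at_top:
  fixes f :: "nat \<Rightarrow> real"
  assumes "incseq f" "\<And>B. \<exists>n. f n > B"
  shows "filterlim f at_top sequentially"
  unfolding filterlim_at_top eventually_sequentially
proof
  fix Z
  obtain n where "f n > Z" using assms(2) by blast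
  then have "\<forall>m\<ge>n. Z \<le> f m"
  proof (intro allI impI)
    fix m assume "n \<le> m"
    then have "f n \<le> f m" using assms(1) by (simp add: incseqD)
    then show "Z \<le> f m" using \<open>f n > Z\<close> by linarith
  qed
  then show "\<exists>N. \<forall>m\<ge>N. Z \<le> f m" by blast
qed

lemma SPd_nonneg: assumes "\<And>x. a x \<ge> 0" shows "SPd a"
proof (cases "a summable_on UNIV")
  case True
  have "conv_uncond a (infsum a UNIV)"
    unfolding conv_uncond_def
  proof (intro allI impI)
    fix e :: "nat \<Rightarrow> 'a" assume e: "bij e"
    have "(a has_sum infsum a UNIV) (e ` UNIV)" using True e by (simp add: bij_is_surj)
    then have "((a \<circ> e) has_sum infsum a UNIV) UNIV"
      using has_sum_reindex[of e UNIV a] e bij_is_inj by blast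
    then have "(a \<circ> e) sums infsum a UNIV" by (rule has_sum_imp_sums)
    then show "(\<lambda>n. \<Sum>i<n. a (e i)) \<longlonglongrightarrow> infsum a UNIV" by (simp add: sums_def)
  qed
  moreover have "infsum a UNIV \<ge> 0" using assms by (simp add: infsum_nonneg)
  ultimately show ?thesis unfolding SPd_def by blast
next
  case False
  have "div_uncond_top a"
    unfolding div_uncond_top_def
  proof (intro allI impI)
    fix e :: "nat \<Rightarrow> 'a" assume e: "bij e"
    show "filterlim (\<lambda>n. \<Sum>i<n. a (e i)) at_top sequentially"
    proof (rule incseq_unbounded_at_top)
      show "incseq (\<lambda>n. \<Sum>i<n. a (e i))"
        by (rule incseq_SucI) (simp add: assms)
      fix B
      show "\<exists>n. (\<Sum>i<n. a (e i)) > B"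
      proof (rule ccontr)
        assume "\<not> ?thesis"
        then have "\<And>n. (\<Sum>i<n. (a \<circ> e) i) \<le> B" by (auto simp: not_less)
        then have "summable (a \<circ> e)" using assms by (intro summableI_nonneg_bounded) auto
        then have "(a \<circ> e) summable_on UNIV" using assms by (simp add: summable_on_UNIV_nonneg_real_iff)
        then have "a summable_on (e ` UNIV)" using summable_on_reindex[of e UNIV a] e bij_is_inj by blast
        then show False using False e by (simp add: bij_is_surj)
      qed
    qed
  qed
  then show ?thesis unfolding SPd_def by blast
qed

lemma notSPd_nonpos:
  assumes inf: "infinite (UNIV :: 'x::countable set)"
    and np: "\<And>x. b x \<le> 0" and x0: "(b :: 'x \<Rightarrow> real) x0 < 0"
  shows "\<not> SPd b"
proof -
  obtain e :: "nat \<Rightarrow> 'x" where e: "bij e" using ex_enum[OF inf] by blast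
  define n0 where "n0 = inv e x0"
  have en0: "e n0 = x0" unfolding n0_def using e by (simp add: bij_is_surj surj_f_inv_f)
  have le: "(\<Sum>i<n. b (e i)) \<le> b x0" if "n > n0" for n
  proof -
    have fin: "finite {..<n}" by simp
    have mem: "n0 \<in> {..<n}" using that by simp
    have eq: "(\<Sum>i<n. b (e i)) = b (e n0) + (\<Sum>i\<in>{..<n} - {n0}. b (e i))"
      using sum.remove[OF fin mem, of "\<lambda>i. b (e i)"] .
    have h: "(\<Sum>i\<in>{..<n} - {n0}. b (e i)) \<le> 0" by (rule sum_nonpos) (rule np)
    show ?thesis using eq h by (simp add: en0)
  qed
  have ev: "eventually (\<lambda>n. (\<Sum>i<n. b (e i)) \<le> b x0) sequentially"
    unfolding eventually_sequentially
  proof (intro exI allI impI)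
    fix n assume "Suc n0 \<le> n"
    then show "(\<Sum>i<n. b (e i)) \<le> b x0" using le by simp
  qed
  have "\<not> conv_uncond b r" if "r \<ge> 0" for r
  proof
    assume "conv_uncond b r"
    then have lim: "(\<lambda>n. \<Sum>i<n. b (e i)) \<longlonglongrightarrow> r" using e unfolding conv_uncond_def by blast
    have "r \<le> b x0" using tendsto_upperbound[OF lim ev trivial_limit_sequentially] .
    then show False using that x0 by linarith
  qed
  moreover have "\<not> div_uncond_top b"
  proof
    assume "div_uncond_top b"
    then have "filterlim (\<lambda>n. \<Sum>i<n. b (e i)) at_top sequentially" using e unfolding div_uncond_top_def by blast
    then have "eventually (\<lambda>n. 0 \<le> (\<Sum>i<n. b (e i))) sequentially" unfolding filterlim_at_top by blast
    then have "eventually (\<lambda>n. 0 \<le> (\<Sum>i<n. b (e i)) \<and> (\<Sum>i<n. b (e i)) \<le> b x0) sequentially"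
      using ev by (rule eventually_conj)
    then obtain N where N: "\<And>n. n \<ge> N \<Longrightarrow> 0 \<le> (\<Sum>i<n. b (e i)) \<and> (\<Sum>i<n. b (e i)) \<le> b x0"
      unfolding eventually_sequentially by blast
    from N[of N] x0 show False by linarith
  qed
  ultimately show ?thesis unfolding SPd_def by blast
qed

primrec stp :: "(nat \<Rightarrow> nat) \<Rightarrow> nat \<Rightarrow> nat \<times> nat" where
  "stp c 0 = (0, 0)"
| "stp c (Suc n) = (if c (snd (stp c n)) \<le> fst (stp c n) then (fst (stp c n), Suc (snd (stp c n)))
     else (Suc (fst (stp c n)), snd (stp c n)))"

definition tkB :: "(nat \<Rightarrow> nat) \<Rightarrow> nat \<Rightarrow> bool" where
  "tkB c n \<longleftrightarrow> c (snd (stp c n)) \<le> fst (stp c n)"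

lemma stp_Suc_B: "tkB c n \<Longrightarrow> stp c (Suc n) = (fst (stp c n), Suc (snd (stp c n)))"
  by (simp add: tkB_def)
lemma stp_Suc_A: "\<not> tkB c n \<Longrightarrow> stp c (Suc n) = (Suc (fst (stp c n)), snd (stp c n))"
  by (simp add: tkB_def)

lemma stp_sum: "fst (stp c n) + snd (stp c n) = n"
  by (induction n) (auto simp: Let_def)

lemma stp_mono_fst: "m \<le> n \<Longrightarrow> fst (stp c m) \<le> fst (stp c n)"
  by (induction n rule: dec_induct) auto
lemma stp_mono_snd: "m \<le> n \<Longrightarrow> snd (stp c m) \<le> snd (stp c n)"
  by (induction n rule: dec_induct) auto

lemma step_hit:
  fixes f :: "nat \<Rightarrow> nat"
  assumes "f 0 = 0" "\<And>n. f (Suc n) \<le> Suc (f n)" "\<And>B. \<exists>n. f n > B"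
  shows "\<exists>n. f n = j \<and> f (Suc n) = Suc j"
proof -
  have ex: "\<exists>n. f n > j" using assms(3) by blast
  define n where "n = (LEAST n. f n > j)"
  have fn: "f n > j" unfolding n_def using LeastI_ex[OF ex] .
  have "n \<noteq> 0" using fn assms(1) by (metis not_less0)
  then obtain m where m: "n = Suc m" by (cases n) auto
  have "\<not> f m > j" using m n_def not_less_Least by (metis lessI)
  then show ?thesis using fn m assms(2)[of m] by (intro exI[of _ m]) auto
qed

lemma snd_unbounded:
  assumes c: "mono c"
  shows "\<exists>n. snd (stp c n) > K"
proof (rule ccontr)
  assume "\<not> ?thesis"
  then have bd: "\<And>n. snd (stp c n) \<le> K" by (simp add: not_less)
  define N where "N = c K + K"
  have "snd (stp c (N + k)) \<ge> k" for k
  proof (induction k)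
    case (Suc k)
    have "fst (stp c (N + k)) \<ge> c K"
      using stp_sum[of c "N + k"] bd[of "N + k"] unfolding N_def by linarith
    moreover have "c (snd (stp c (N + k))) \<le> c K" using c bd by (simp add: monoD)
    ultimately have "tkB c (N + k)" unfolding tkB_def by linarith
    then show ?case using Suc stp_Suc_B[of c "N + k"] by simp
  qed simp
  from this[of "Suc K"] bd[of "N + Suc K"] show False by simp
qed

lemma fst_unbounded:
  assumes c: "\<And>j. c j \<ge> j"
  shows "\<exists>n. fst (stp c n) > K"
proof (rule ccontr)
  assume "\<not> ?thesis"
  then have bd: "\<And>n. fst (stp c n) \<le> K" by (simp add: not_less)
  define N where "N = Suc (2 * K)"
  have "fst (stp c (N + k)) \<ge> k" for k
  proof (induction k)
    case (Suc k)
    have "snd (stp c (N + k)) > K"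
      using stp_sum[of c "N + k"] bd[of "N + k"] unfolding N_def by linarith
    then have "c (snd (stp c (N + k))) > fst (stp c (N + k))"
      using c[of "snd (stp c (N + k))"] bd[of "N+k"] by linarith
    then have "\<not> tkB c (N + k)" unfolding tkB_def by linarith
    then show ?case using Suc stp_Suc_A[of c "N + k"] by simp
  qed simp
  from this[of "Suc K"] bd[of "N + Suc K"] show False by simp
qed

lemma snd_hit:
  assumes "mono c"
  shows "\<exists>n. snd (stp c n) = j \<and> tkB c n"
proof -
  have "\<exists>n. snd (stp c n) = j \<and> snd (stp c (Suc n)) = Suc j"
    by (rule step_hit) (use snd_unbounded[OF assms] in \<open>auto simp: Let_def\<close>)
  then obtain n where "snd (stp c n) = j" "snd (stp c (Suc n)) = Suc j" by blast
  then show ?thesis by (metis n_not_Suc_n snd_conv stp_Suc_A)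
qed

lemma fst_hit:
  assumes "\<And>j. c j \<ge> j"
  shows "\<exists>n. fst (stp c n) = i \<and> \<not> tkB c n"
proof -
  have "\<exists>n. fst (stp c n) = i \<and> fst (stp c (Suc n)) = Suc i"
    by (rule step_hit) (use fst_unbounded[OF assms] in \<open>auto simp: Let_def\<close>)
  then obtain n where "fst (stp c n) = i" "fst (stp c (Suc n)) = Suc i" by blast
  then show ?thesis by (metis n_not_Suc_n fst_conv stp_Suc_B)
qed

definition mrg :: "(nat \<Rightarrow> nat) \<Rightarrow> (nat \<Rightarrow> 'x) \<Rightarrow> (nat \<Rightarrow> 'x) \<Rightarrow> nat \<Rightarrow> 'x" where
  "mrg c \<alpha> \<beta> n = (if tkB c n then \<beta> (snd (stp c n)) else \<alpha> (fst (stp c n)))"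

lemma mrg_bij:
  assumes \<alpha>: "bij_betw \<alpha> UNIV A" and \<beta>: "bij_betw \<beta> UNIV (- A)"
    and c: "mono c" "\<And>j. c j \<ge> j"
  shows "bij (mrg c \<alpha> \<beta>)"
proof (rule bijI)
  show "inj (mrg c \<alpha> \<beta>)"
  proof (rule injI)
    have main: "m = n" if eq: "mrg c \<alpha> \<beta> m = mrg c \<alpha> \<beta> n" and mn: "m \<le> n" for m n
    proof (rule ccontr)
      assume "m \<noteq> n"
      then have "Suc m \<le> n" using mn by simp
      show False
      proof (cases "tkB c m"; cases "tkB c n")
        assume "tkB c m" "tkB c n"
        then have "\<beta> (snd (stp c m)) = \<beta> (snd (stp c n))" using eq by (simp add: mrg_def)
        then have "snd (stp c m) = snd (stp c n)" using \<beta> by (simp add: bij_betw_def inj_eq)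
        moreover have "snd (stp c (Suc m)) \<le> snd (stp c n)" using stp_mono_snd[OF \<open>Suc m \<le> n\<close>] .
        ultimately show False using stp_Suc_B[OF \<open>tkB c m\<close>] by simp
      next
        assume "\<not> tkB c m" "\<not> tkB c n"
        then have "\<alpha> (fst (stp c m)) = \<alpha> (fst (stp c n))" using eq by (simp add: mrg_def)
        then have "fst (stp c m) = fst (stp c n)" using \<alpha> by (simp add: bij_betw_def inj_eq)
        moreover have "fst (stp c (Suc m)) \<le> fst (stp c n)" using stp_mono_fst[OF \<open>Suc m \<le> n\<close>] .
        ultimately show False using stp_Suc_A[OF \<open>\<not> tkB c m\<close>] by simp
      next
        assume "tkB c m" "\<not> tkB c n"
        then have "\<beta> (snd (stp c m)) = \<alpha> (fst (stp c n))" using eq by (simp add: mrg_def)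
        then show False using \<alpha> \<beta> by (metis ComplD bij_betwE iso_tuple_UNIV_I)
      next
        assume "\<not> tkB c m" "tkB c n"
        then have "\<alpha> (fst (stp c m)) = \<beta> (snd (stp c n))" using eq by (simp add: mrg_def)
        then show False using \<alpha> \<beta> by (metis ComplD bij_betwE iso_tuple_UNIV_I)
      qed
    qed
    fix m n assume "mrg c \<alpha> \<beta> m = mrg c \<alpha> \<beta> n"
    then show "m = n" using main[of m n] main[of n m] by (cases "m \<le> n") auto
  qed
next
  show "surj (mrg c \<alpha> \<beta>)"
    unfolding surj_def
  proof
    fix x :: 'a
    show "\<exists>n. x = mrg c \<alpha> \<beta> n"
    proof (cases "x \<in> A")
      case True
      then obtain i where "x = \<alpha> i" using \<alpha> by (metis bij_betw_def imageE)
      moreover obtain n where "fst (stp c n) = i" "\<not> tkB c n" using fst_hit[OF c(2)] by blast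
      ultimately show ?thesis by (auto simp: mrg_def)
    next
      case False
      then obtain j where "x = \<beta> j" using \<beta> by (metis ComplI bij_betw_def imageE)
      moreover obtain n where "snd (stp c n) = j" "tkB c n" using snd_hit[OF c(1)] by blast
      ultimately show ?thesis by (auto simp: mrg_def)
    qed
  qed
qed

lemma mrg_sum:
  "(\<Sum>m<n. a (mrg c \<alpha> \<beta> m)) = (\<Sum>k<snd (stp c n). a (\<beta> k)) + (\<Sum>i<fst (stp c n). a (\<alpha> i))"
proof (induction n)
  case (Suc n)
  then show ?case by (cases "tkB c n") (auto simp: mrg_def tkB_def algebra_simps)
qed simp

lemma enum_set:
  assumes "infinite (S :: 'x::countable set)"
  shows "\<exists>\<alpha>. bij_betw \<alpha> (UNIV::nat set) S"
proof -
  obtain f :: "'x \<Rightarrow> nat" where "bij_betw f S UNIV"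
    using countableE_infinite[OF countableI_type assms] by blast
  then have "bij_betw (inv_into S f) UNIV S" by (rule bij_betw_inv_into)
  then show ?thesis by blast
qed

lemma split_infinite:
  assumes "infinite (A0 :: 'x::countable set)"
  shows "\<exists>A \<subseteq> A0. infinite A \<and> infinite (- A)"
proof -
  obtain g where g: "bij_betw g (UNIV::nat set) A0" using enum_set[OF assms] by blast
  have injg: "inj g" using g bij_betw_imp_inj_on by blast
  define A where "A = g ` range (\<lambda>n. 2*n)"
  have sub: "A \<subseteq> A0" using g by (auto simp: A_def bij_betw_def)
  have i1: "infinite (range (\<lambda>n::nat. 2*n))" by (rule range_inj_infinite) (simp add: inj_on_def)
  have i2: "infinite (range (\<lambda>n::nat. 2*n+1))" by (rule range_inj_infinite) (simp add: inj_on_def)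
  have "infinite A" unfolding A_def using i1 injg by (simp add: finite_image_iff inj_on_subset)
  moreover have "g ` range (\<lambda>n. 2*n+1) \<subseteq> - A"
  proof
    fix x assume "x \<in> g ` range (\<lambda>n. 2*n+1)"
    then obtain m where m: "x = g (2*m+1)" by blast
    show "x \<in> - A"
    proof
      assume "x \<in> A"
      then obtain n where "x = g (2*n)" unfolding A_def by blast
      with m injg have "2*m+1 = 2*n" by (simp add: inj_eq)
      then show False by presburger
    qed
  qed
  moreover have "infinite (g ` range (\<lambda>n. 2*n+1))" using i2 injg by (simp add: finite_image_iff inj_on_subset)
  ultimately show ?thesis using sub finite_subset by blast
qed

lemma div_notNEG:
  assumes div: "div_uncond_top (a :: 'x::countable \<Rightarrow> real)"
  shows "\<not> NEG a"
proof
  assume "NEG a"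
  then obtain \<epsilon> A0 where \<epsilon>: "\<epsilon> > 0" "infinite A0" "\<forall>x\<in>A0. a x < -\<epsilon>" unfolding NEG_def by blast
  obtain A where A: "A \<subseteq> A0" "infinite A" "infinite (-A)" using split_infinite[OF \<epsilon>(2)] by blast
  obtain \<alpha> where \<alpha>: "bij_betw \<alpha> (UNIV::nat set) A" using enum_set[OF A(2)] by blast
  obtain \<beta> where \<beta>: "bij_betw \<beta> (UNIV::nat set) (-A)" using enum_set[OF A(3)] by blast
  define c where "c j = (\<Sum>k<j. nat \<lceil>\<bar>a (\<beta> k)\<bar> / \<epsilon>\<rceil> + 1)" for j
  have cmono: "mono c" unfolding c_def mono_def by (auto intro!: sum_mono2)
  have cge: "c j \<ge> j" for j
  proof -
    have "(\<Sum>k<j. (1::nat)) \<le> (\<Sum>k<j. nat \<lceil>\<bar>a (\<beta> k)\<bar> / \<epsilon>\<rceil> + 1)" by (rule sum_mono) simp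
    then show ?thesis by (simp add: c_def)
  qed
  define e where "e = mrg c \<alpha> \<beta>"
  have e: "bij e" using mrg_bij[OF \<alpha> \<beta> cmono cge] e_def by simp
  have bsum: "(\<Sum>k<j. a (\<beta> k)) \<le> \<epsilon> * real (c j)" for j
  proof -
    have "(\<Sum>k<j. a (\<beta> k)) \<le> (\<Sum>k<j. \<epsilon> * (real (nat \<lceil>\<bar>a (\<beta> k)\<bar> / \<epsilon>\<rceil>) + 1))"
    proof (rule sum_mono)
      fix k
      have h: "\<bar>a (\<beta> k)\<bar> / \<epsilon> \<le> real (nat \<lceil>\<bar>a (\<beta> k)\<bar> / \<epsilon>\<rceil>)" by (rule real_nat_ceiling_ge)
      have "\<bar>a (\<beta> k)\<bar> = \<epsilon> * (\<bar>a (\<beta> k)\<bar> / \<epsilon>)" using \<epsilon>(1) by simp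
      also have "\<dots> \<le> \<epsilon> * real (nat \<lceil>\<bar>a (\<beta> k)\<bar> / \<epsilon>\<rceil>)"
        using h \<epsilon>(1) by (intro mult_left_mono) auto
      finally have "\<bar>a (\<beta> k)\<bar> \<le> \<epsilon> * real (nat \<lceil>\<bar>a (\<beta> k)\<bar> / \<epsilon>\<rceil>)" .
      then show "a (\<beta> k) \<le> \<epsilon> * (real (nat \<lceil>\<bar>a (\<beta> k)\<bar> / \<epsilon>\<rceil>) + 1)"
        using \<epsilon>(1) by (simp add: distrib_left)
    qed
    also have "\<dots> = \<epsilon> * (\<Sum>k<j. real (nat \<lceil>\<bar>a (\<beta> k)\<bar> / \<epsilon>\<rceil>) + 1)" by (simp add: sum_distrib_left)
    also have "\<dots> = \<epsilon> * real (c j)" by (simp add: c_def add.commute)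
    finally show ?thesis .
  qed
  have asum: "(\<Sum>i<I. a (\<alpha> i)) \<le> - \<epsilon> * real I" for I
  proof -
    have "(\<Sum>i<I. a (\<alpha> i)) \<le> (\<Sum>i<I. - \<epsilon>)"
    proof (rule sum_mono)
      fix i
      have "\<alpha> i \<in> A0" using \<alpha> A(1) by (auto simp: bij_betw_def)
      then have "a (\<alpha> i) < - \<epsilon>" using \<epsilon>(3) by blast
      then show "a (\<alpha> i) \<le> - \<epsilon>" by linarith
    qed
    then show ?thesis by (simp add: mult.commute)
  qed
  have key: "(\<Sum>m<n. a (e m)) \<le> 0" if "tkB c n" for n
  proof -
    have le: "c (snd (stp c n)) \<le> fst (stp c n)" using that by (simp add: tkB_def)
    have "(\<Sum>m<n. a (e m)) \<le> \<epsilon> * real (c (snd (stp c n))) + - \<epsilon> * real (fst (stp c n))"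
      unfolding e_def mrg_sum using bsum asum by (intro add_mono)
    also have "\<dots> \<le> 0" using le \<epsilon>(1) by (simp add: mult_left_mono)
    finally show ?thesis .
  qed
  from div e have "filterlim (\<lambda>n. \<Sum>i<n. a (e i)) at_top sequentially"
    unfolding div_uncond_top_def by blast
  then have "eventually (\<lambda>n. 1 \<le> (\<Sum>i<n. a (e i))) sequentially" unfolding filterlim_at_top by blast
  then obtain N where N: "\<And>n. n \<ge> N \<Longrightarrow> 1 \<le> (\<Sum>i<n. a (e i))" unfolding eventually_sequentially by blast
  obtain n where n: "snd (stp c n) = N" "tkB c n" using snd_hit[OF cmono] by blast
  have "n \<ge> N" using stp_sum[of c n] n(1) by linarith
  then have "1 \<le> (\<Sum>i<n. a (e i))" by (rule N)
  with key[OF n(2)] show False by linarith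
qed

lemma tendsto0_notNEG:
  assumes e: "bij e" and lim: "(\<lambda>n. a (e n)) \<longlonglongrightarrow> (0::real)"
  shows "\<not> NEG a"
proof
  assume "NEG a"
  then obtain d B where d: "d > 0" "infinite B" "\<forall>x\<in>B. a x < -d" unfolding NEG_def by blast
  have "eventually (\<lambda>n. -d < a (e n)) sequentially" using order_tendstoD(1)[OF lim] d(1) by simp
  then obtain N where N: "\<And>n. n \<ge> N \<Longrightarrow> -d < a (e n)" unfolding eventually_sequentially by blast
  have "infinite (e -` B)" using inf_vimage[OF e d(2)] .
  then obtain n where n: "n \<ge> N" "n \<in> e -` B" using infinite_nat_iff_unbounded_le by blast
  have "-d < a (e n)" using N[OF n(1)] .
  moreover have "a (e n) < -d" using d(3) n(2) by blast
  ultimately show False by linarith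
qed

lemma SPd_notNEG:
  assumes inf: "infinite (UNIV :: 'x::countable set)" and sp: "SPd (a :: 'x \<Rightarrow> real)"
  shows "\<not> NEG a"
proof -
  obtain e :: "nat \<Rightarrow> 'x" where e: "bij e" using ex_enum[OF inf] by blast
  show ?thesis
  proof (cases "div_uncond_top a")
    case True then show ?thesis by (rule div_notNEG)
  next
    case False
    then obtain r where "conv_uncond a r" using sp unfolding SPd_def by blast
    then have "(\<lambda>n. \<Sum>i<n. a (e i)) \<longlonglongrightarrow> r" using e unfolding conv_uncond_def by blast
    then have "(\<lambda>i. a (e i)) sums r" by (simp add: sums_def)
    then have "(\<lambda>n. a (e n)) \<longlonglongrightarrow> 0" by (intro summable_LIMSEQ_zero) (auto simp: sums_iff)
    then show ?thesis by (rule tendsto0_notNEG[OF e])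
  qed
qed

lemma BT_notNEG:
  assumes "infinite (UNIV :: 'x::countable set)" "BT (a :: 'x \<Rightarrow> real)"
  shows "\<not> NEG a"
  using assms SPd_notNEG BT_def by blast

primrec T :: "nat \<Rightarrow> real" where
  "T 0 = 0"
| "T (Suc j) = T j + (if T j < 0 then 1 else 0) - 1 / (real j + 1)"

definition s :: "nat \<Rightarrow> real" where
  "s n = (if even n then (if T (n div 2) < 0 then 1 else 0) else - 1 / (real (n div 2) + 1))"

lemma T_bounds: "-1 \<le> T j \<and> T j \<le> 1"
proof (induction j)
  case (Suc j)
  have h: "0 < 1 / (real j + 1)" "1 / (real j + 1) \<le> 1" by (auto simp: field_simps)
  show ?case
  proof (cases "T j < 0")
    case True
    then have "T (Suc j) = T j + 1 - 1 / (real j + 1)" by simp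
    then show ?thesis using Suc h True by linarith
  next
    case False
    then have "T (Suc j) = T j - 1 / (real j + 1)" by simp
    then show ?thesis using Suc h False by linarith
  qed
qed simp

lemma T_neg_inf: "\<exists>j\<ge>N. T j < 0"
proof (rule ccontr)
  assume "\<not> ?thesis"
  then have nn: "\<And>j. j \<ge> N \<Longrightarrow> T j \<ge> 0" by (simp add: not_less)
  have eq: "T (N + k) = T N - (\<Sum>i<k. 1 / (real (i + N) + 1))" for k
  proof (induction k)
    case (Suc k)
    have "\<not> T (N + k) < 0" using nn[of "N+k"] by simp
    then show ?case using Suc by (simp add: algebra_simps)
  qed simp
  have bd: "(\<Sum>i<k. 1 / (real (i + N) + 1)) \<le> 1" for k
    using eq[of k] nn[of "N+k"] T_bounds[of N] by simp
  have "summable (\<lambda>i. 1 / (real (i + N) + 1))"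
    by (rule summableI_nonneg_bounded[OF _ bd]) simp
  then have "summable (\<lambda>n. 1 / (real n + 1))"
    using summable_iff_shift[of "\<lambda>n. 1 / (real n + 1)" N] by simp
  then have "summable (\<lambda>n. inverse (real (Suc n)))" by (simp add: inverse_eq_divide add.commute)
  then have "summable (\<lambda>n. inverse (real n))" using summable_Suc_iff[of "\<lambda>n. inverse (real n)"] by simp
  then show False using not_summable_harmonic[where 'a=real] by simp
qed

lemma s_sum: "(\<Sum>i<2*m. s i) = T m"
proof (induction m)
  case (Suc m)
  have "2 * Suc m = Suc (Suc (2*m))" by simp
  then have "(\<Sum>i<2 * Suc m. s i) = (\<Sum>i<2*m. s i) + s (2*m) + s (Suc (2*m))" by simp
  also have "s (2*m) = (if T m < 0 then 1 else 0)" by (simp add: s_def)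
  also have "s (Suc (2*m)) = - 1 / (real m + 1)" by (simp add: s_def)
  finally show ?case using Suc by simp
qed simp

lemma s_inf: "infinite {n. s n > 1/2}"
  unfolding infinite_nat_iff_unbounded_le
proof
  fix N
  obtain j where j: "j \<ge> N" "T j < 0" using T_neg_inf by blast
  have "s (2*j) = 1" using j by (simp add: s_def)
  then show "\<exists>n\<ge>N. n \<in> {n. s n > 1/2}" using j by (intro exI[of _ "2*j"]) auto
qed

lemma s_neg_fin: assumes "\<delta> > 0" shows "finite {n. s n < -\<delta>}"
proof -
  have "{n. s n < -\<delta>} \<subseteq> {..nat \<lceil>2/\<delta>\<rceil>}"
  proof
    fix n assume "n \<in> {n. s n < -\<delta>}"
    then have sn: "s n < -\<delta>" by simp
    then have odd: "odd n" using assms by (simp add: s_def split: if_splits)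
    define k where "k = n div 2"
    have nk: "n = 2*k+1" using odd unfolding k_def by presburger
    have "1 / (real k + 1) > \<delta>" using sn odd by (simp add: s_def k_def)
    then have "\<delta> * (real k + 1) < 1" by (simp add: field_simps)
    then have "real k + 1 < 1 / \<delta>" using assms by (simp add: field_simps)
    then have "real n < 2 / \<delta>" using nk by (simp add: field_simps)
    then have "n \<le> nat \<lceil>2/\<delta>\<rceil>" by linarith
    then show "n \<in> {..nat \<lceil>2/\<delta>\<rceil>}" by simp
  qed
  then show ?thesis using finite_subset by blast
qed

lemma counterexample:
  assumes inf: "infinite (UNIV :: 'x::countable set)"
  shows "\<exists>w v :: 'x \<Rightarrow> real. btri w v \<and> \<not> sum_preorder w v"
proof -
  obtain e :: "nat \<Rightarrow> 'x" where e: "bij e" using ex_enum[OF inf] by blast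
  define d where "d x = s (inv e x)" for x
  have de: "d (e n) = s n" for n unfolding d_def using e by (simp add: bij_is_inj)
  have ee: "e (inv e x) = x" for x using e by (simp add: bij_is_surj surj_f_inv_f)
  have nconv: "\<not> conv_uncond d r" for r
  proof
    assume "conv_uncond d r"
    then have "(\<lambda>n. \<Sum>i<n. d (e i)) \<longlonglongrightarrow> r" using e unfolding conv_uncond_def by blast
    then have "(\<lambda>n. \<Sum>i<n. s i) \<longlonglongrightarrow> r" by (simp add: de)
    then have "s sums r" by (simp add: sums_def)
    then have "s \<longlonglongrightarrow> 0" by (intro summable_LIMSEQ_zero) (auto simp: sums_iff)
    then have "eventually (\<lambda>n. s n < 1/2) sequentially" by (rule order_tendstoD) simp
    then obtain N where N: "\<And>n. n \<ge> N \<Longrightarrow> s n < 1/2" unfolding eventually_sequentially by blast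
    obtain n where n: "n \<ge> N" "n \<in> {n. s n > 1/2}" using s_inf infinite_nat_iff_unbounded_le by blast
    have "s n < 1/2" using N[OF n(1)] .
    moreover have "s n > 1/2" using n(2) by simp
    ultimately show False by linarith
  qed
  have ndiv: "\<not> div_uncond_top d"
  proof
    assume "div_uncond_top d"
    then have "filterlim (\<lambda>n. \<Sum>i<n. d (e i)) at_top sequentially" using e unfolding div_uncond_top_def by blast
    then have "filterlim (\<lambda>n. \<Sum>i<n. s i) at_top sequentially" by (simp add: de)
    then have "eventually (\<lambda>n. 2 \<le> (\<Sum>i<n. s i)) sequentially" unfolding filterlim_at_top by blast
    then obtain N where N: "\<And>n. n \<ge> N \<Longrightarrow> 2 \<le> (\<Sum>i<n. s i)" unfolding eventually_sequentially by blast
    have "2 \<le> T N" using N[of "2*N"] s_sum[of N] by simp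
    then show False using T_bounds[of N] by simp
  qed
  have nsp: "\<not> SPd d" using nconv ndiv unfolding SPd_def by blast
  have pos: "POS d"
  proof -
    have ij: "inj_on e {n. s n > 1/2}" using inj_on_subset[OF bij_is_inj[OF e] subset_UNIV] .
    have "infinite (e ` {n. s n > 1/2})"
    proof
      assume "finite (e ` {n. s n > 1/2})"
      then have "finite {n. s n > 1/2}" using finite_imageD[OF _ ij] by blast
      then show False using s_inf by simp
    qed
    moreover have "\<forall>x\<in>e ` {n. s n > 1/2}. d x > 1/2" using de by auto
    moreover have "(1/2::real) > 0" by simp
    ultimately show ?thesis unfolding POS_def by blast
  qed
  have nneg: "\<not> NEG d"
  proof
    assume "NEG d"
    then obtain \<delta> B where \<delta>: "\<delta> > 0" "infinite B" "\<forall>x\<in>B. d x < -\<delta>" unfolding NEG_def by blast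
    have "B \<subseteq> e ` {n. s n < -\<delta>}"
    proof
      fix x assume "x \<in> B"
      then have "s (inv e x) < -\<delta>" using \<delta>(3) d_def by auto
      then have "inv e x \<in> {n. s n < -\<delta>}" by simp
      then have "e (inv e x) \<in> e ` {n. s n < -\<delta>}" by (rule imageI)
      then show "x \<in> e ` {n. s n < -\<delta>}" using ee[of x] by simp
    qed
    then have "finite B" using s_neg_fin[OF \<delta>(1)] finite_subset by blast
    with \<delta>(2) show False by simp
  qed
  have "BT d" using nsp pos nneg unfolding BT_def by blast
  then have "btri d (\<lambda>x. 0)" by (simp add: btri_BT)
  moreover have "\<not> sum_preorder d (\<lambda>x. 0)" using nsp by (simp add: sum_preorder_def SPd_def)
  ultimately show ?thesis by blast
qed

theorem proposition3:
  assumes "infinite (UNIV :: 'x::countable set)"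
  shows "(is_preorder (btri :: ('x \<Rightarrow> real) \<Rightarrow> ('x \<Rightarrow> real) \<Rightarrow> bool)
           \<and> strong_pareto (btri :: ('x \<Rightarrow> real) \<Rightarrow> ('x \<Rightarrow> real) \<Rightarrow> bool)
           \<and> permutation_invariance (btri :: ('x \<Rightarrow> real) \<Rightarrow> ('x \<Rightarrow> real) \<Rightarrow> bool)
           \<and> quasi_independence (btri :: ('x \<Rightarrow> real) \<Rightarrow> ('x \<Rightarrow> real) \<Rightarrow> bool))
         \<and> (weakly_extends (btri :: ('x \<Rightarrow> real) \<Rightarrow> ('x \<Rightarrow> real) \<Rightarrow> bool) sum_preorder
           \<and> (\<exists>w v :: 'x \<Rightarrow> real. btri w v \<and> \<not> sum_preorder w v))"
proof (intro conjI)
  show "is_preorder (btri :: ('x \<Rightarrow> real) \<Rightarrow> ('x \<Rightarrow> real) \<Rightarrow> bool)"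
    unfolding is_preorder_def
  proof (intro conjI allI impI)
    fix w :: "'x \<Rightarrow> real"
    show "btri w w" by (simp add: btri_BT BT_def SPd_zero)
  next
    fix u v w :: "'x \<Rightarrow> real"
    assume 1: "btri u v" and 2: "btri v w"
    have b1: "BT (\<lambda>x. u x - v x)" and b2: "BT (\<lambda>x. v x - w x)" using 1 2 by (simp_all add: btri_BT)
    have "BT (\<lambda>x. (u x - v x) + (v x - w x))"
      by (rule BT_add[OF b1 b2 BT_notNEG[OF assms b1] BT_notNEG[OF assms b2]])
    then show "btri u w" by (simp add: btri_BT)
  qed
next
  show "strong_pareto (btri :: ('x \<Rightarrow> real) \<Rightarrow> ('x \<Rightarrow> real) \<Rightarrow> bool)"
    unfolding strong_pareto_def strict_of_def
  proof (intro allI impI conjI)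
    fix w v :: "'x \<Rightarrow> real"
    assume h: "(\<forall>x. v x \<le> w x) \<and> (\<exists>x. v x < w x)"
    then have "SPd (\<lambda>x. w x - v x)" by (intro SPd_nonneg) auto
    then show "btri w v" by (simp add: btri_BT BT_def)
    obtain x0 where x0: "v x0 < w x0" using h by blast
    have "\<not> SPd (\<lambda>x. v x - w x)" using h x0 by (intro notSPd_nonpos[OF assms]) auto
    moreover have "\<not> POS (\<lambda>x. v x - w x)"
    proof
      assume "POS (\<lambda>x. v x - w x)"
      then obtain c A where c: "c > 0" "infinite A" "\<forall>x\<in>A. v x - w x > c" unfolding POS_def by blast
      from c(2) have "A \<noteq> {}" by auto
      then obtain y where "y \<in> A" by blast
      then have "v y - w y > c" using c(3) by blast
      moreover have "v y \<le> w y" using h by blast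
      ultimately show False using c(1) by linarith
    qed
    ultimately show "\<not> btri v w" by (simp add: btri_BT BT_def)
  qed
next
  show "permutation_invariance (btri :: ('x \<Rightarrow> real) \<Rightarrow> ('x \<Rightarrow> real) \<Rightarrow> bool)"
    unfolding permutation_invariance_def
  proof (intro allI impI)
    fix w v :: "'x \<Rightarrow> real" and \<pi> :: "'x \<Rightarrow> 'x"
    assume p: "bij \<pi>"
    have "(\<lambda>x. (w \<circ> \<pi>) x - (v \<circ> \<pi>) x) = (\<lambda>x. w x - v x) \<circ> \<pi>" by (simp add: comp_def)
    then show "btri w v = btri (w \<circ> \<pi>) (v \<circ> \<pi>)" using BT_perm[OF p] by (simp add: btri_BT)
  qed
next
  show "quasi_independence (btri :: ('x \<Rightarrow> real) \<Rightarrow> ('x \<Rightarrow> real) \<Rightarrow> bool)"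
    unfolding quasi_independence_def
  proof (intro allI impI)
    fix w v u :: "'x \<Rightarrow> real" and \<alpha> :: real
    assume b: "btri w v" and al: "0 \<le> \<alpha> \<and> \<alpha> \<le> 1"
    have "(\<lambda>x. (\<alpha> * w x + (1 - \<alpha>) * u x) - (\<alpha> * v x + (1 - \<alpha>) * u x)) = (\<lambda>x. \<alpha> * (w x - v x))"
      by (auto simp: algebra_simps)
    moreover have "BT (\<lambda>x. \<alpha> * (w x - v x))" using BT_scale[of \<alpha> "\<lambda>x. w x - v x"] al b by (simp add: btri_BT)
    ultimately show "btri (\<lambda>x. \<alpha> * w x + (1 - \<alpha>) * u x) (\<lambda>x. \<alpha> * v x + (1 - \<alpha>) * u x)"
      by (simp add: btri_BT)
  qed
next
  show "weakly_extends (btri :: ('x \<Rightarrow> real) \<Rightarrow> ('x \<Rightarrow> real) \<Rightarrow> bool) sum_preorder"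
    unfolding weakly_extends_def btri_def by blast
next
  show "\<exists>w v :: 'x \<Rightarrow> real. btri w v \<and> \<not> sum_preorder w v" by (rule counterexample[OF assms])
qed

end
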